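(* Let $(\mathcal{X},d)$ be a finite metric space, $P$ a probability distribution on $\mathcal{X}$, $k\ge1$ an integer, $O\in\mathcal{X}_k$ an optimal $k$-RP solution, and $\rho\ge1$. Let $S\in\mathcal{X}_k$ be a $k$-multiset returned by a $\rho$-approximation algorithm for the uniform capacitated $k$-median objective, i.e., satisfying $d_W(D_S,P)\le \rho\cdot\min_{T\in\mathcal{X}_k} d_W(D_T,P)$. Then $$\mathbb{E}_{X\sim P_k}[d_k(S,X)]\le (\rho+2)\cdot \mathbb{E}_{X\sim P_k}[d_k(O,X)].$$
   Context: $\mathcal{X}_k$ is the set of multisets of exactly $k$ points of $\mathcal{X}$. For $U,V\in\mathcal{X}_k$, $d_k(U,V)$ is the minimum, over perfect matchings between the $k$ elements of $U$ and the $k$ elements of $V$ (with multiplicity), of the sum of the distances of matched pairs. $P_k$ is the distribution of the multiset of $k$ points drawn i.i.d. from $P$. The $k$-RP cost of $S\in\mathcal{X}_k$ is $\mathbb{E}_{X\sim P_k}[d_k(S,X)]$, and $O$ minimizes this cost. For $T\in\mathcal{X}_k$, $D_T$ is the probability distribution on $\mathcal{X}$ assigning to each $x$ its multiplicity in $T$ divided by $k$. $d_W$ denotes the Wasserstein-1 (earth mover's) distance between probability distributions on $(\mathcal{X},d)$. *)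

theory Defs
  imports "HOL-Probability.Probability"
begin

text \<open>The finite metric space is a finite type with class metric_space; distance is dist.\<close>

definition mset_k :: "nat \<Rightarrow> 'a multiset set" where
  "mset_k k = {U. size U = k}"

text \<open>Matching distance: minimum over perfect matchings (with multiplicity), expressed
  by pairing up enumerations xs of U and ys of V position by position.\<close>
definition dk :: "'a::metric_space multiset \<Rightarrow> 'a multiset \<Rightarrow> real" where
  "dk U V = Min {(\<Sum>i<size U. dist (xs ! i) (ys ! i)) | xs ys. mset xs = U \<and> mset ys = V}"

definition Pk :: "nat \<Rightarrow> 'a pmf \<Rightarrow> 'a multiset pmf" where
  "Pk k P = map_pmf mset (replicate_pmf k P)"

definition rp_cost :: "nat \<Rightarrow> 'a::metric_space pmf \<Rightarrow> 'a multiset \<Rightarrow> real" where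
  "rp_cost k P S = measure_pmf.expectation (Pk k P) (\<lambda>X. dk S X)"

definition DT :: "'a multiset \<Rightarrow> 'a pmf" where
  "DT T = pmf_of_multiset T"

definition couplings :: "'a pmf \<Rightarrow> 'a pmf \<Rightarrow> ('a \<times> 'a) pmf set" where
  "couplings \<mu> \<nu> = {\<pi>. map_pmf fst \<pi> = \<mu> \<and> map_pmf snd \<pi> = \<nu>}"

definition wasserstein :: "'a::metric_space pmf \<Rightarrow> 'a pmf \<Rightarrow> real" where
  "wasserstein \<mu> \<nu> = (INF \<pi>\<in>couplings \<mu> \<nu>. measure_pmf.expectation \<pi> (\<lambda>(x, y). dist x y))"

end

theory Submission
  imports Defs "HOL-Combinatorics.Permutations"
begin


lemma hall:
  fixes A :: "'b set" and N :: "'b \<Rightarrow> 'c set"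
  assumes "finite A" "\<forall>a\<in>A. finite (N a)" "\<forall>B\<subseteq>A. card B \<le> card (\<Union>(N ` B))"
  shows "\<exists>f. inj_on f A \<and> (\<forall>a\<in>A. f a \<in> N a)"
  using assms
proof (induction "card A" arbitrary: A N rule: less_induct)
  case less
  note fin = less.prems(1) and finN = less.prems(2) and H = less.prems(3)
  have finU: "finite (\<Union>(N ` B))" if "B \<subseteq> A" for B
    using that fin finN by (meson finite_UN_I finite_subset subsetD)
  show ?case
  proof (cases "A = {}")
    case True then show ?thesis by auto
  next
    case Ane: False
    show ?thesis
    proof (cases "\<forall>B. B \<subseteq> A \<and> B \<noteq> {} \<and> B \<noteq> A \<longrightarrow> card B < card (\<Union>(N ` B))")
      case True
      obtain a where a: "a \<in> A" using Ane by blast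
      have "card {a} \<le> card (N a)" using H[rule_format, of "{a}"] a by auto
      then have "N a \<noteq> {}" using finN a by auto
      then obtain b where b: "b \<in> N a" by blast
      define A' where "A' = A - {a}"
      define N' where "N' = (\<lambda>x. N x - {b})"
      have "card A' < card A" unfolding A'_def by (rule card_Diff1_less[OF fin a])
      moreover have "finite A'" unfolding A'_def using fin by simp
      moreover have "\<forall>x\<in>A'. finite (N' x)" unfolding A'_def N'_def using finN by auto
      moreover have "\<forall>B\<subseteq>A'. card B \<le> card (\<Union>(N' ` B))"
      proof (intro allI impI)
        fix B assume B: "B \<subseteq> A'"
        show "card B \<le> card (\<Union>(N' ` B))"
        proof (cases "B = {}")
          case True then show ?thesis by simp
        next
          case False
          have BA: "B \<subseteq> A" "B \<noteq> A" using B a unfolding A'_def by auto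
          have lt: "card B < card (\<Union>(N ` B))" using True BA False by blast
          have eq: "\<Union>(N' ` B) = \<Union>(N ` B) - {b}" unfolding N'_def by auto
          have "card (\<Union>(N ` B)) - 1 \<le> card (\<Union>(N ` B) - {b})"
            by (metis card_Diff_singleton_if diff_le_self order_refl)
          then show ?thesis using lt unfolding eq by linarith
        qed
      qed
      ultimately obtain f' where f': "inj_on f' A'" "\<forall>x\<in>A'. f' x \<in> N' x"
        using less.hyps by blast
      define f where "f = f'(a := b)"
      have "inj_on f A"
      proof (rule inj_onI)
        fix x y assume xy: "x \<in> A" "y \<in> A" "f x = f y"
        show "x = y"
        proof (cases "x = a"; cases "y = a")
          assume "x \<noteq> a" "y \<noteq> a"
          then show ?thesis using xy f'(1) unfolding f_def A'_def by (auto dest: inj_onD)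
        next
          assume "x = a" "y \<noteq> a"
          then have "f' y \<noteq> b" using f'(2) xy unfolding A'_def N'_def by auto
          then show ?thesis using xy \<open>x = a\<close> \<open>y \<noteq> a\<close> unfolding f_def by auto
        next
          assume "x \<noteq> a" "y = a"
          then have "f' x \<noteq> b" using f'(2) xy unfolding A'_def N'_def by auto
          then show ?thesis using xy \<open>x \<noteq> a\<close> \<open>y = a\<close> unfolding f_def by auto
        qed simp
      qed
      moreover have "\<forall>x\<in>A. f x \<in> N x" using f'(2) b unfolding f_def A'_def N'_def by auto
      ultimately show ?thesis by blast
    next
      case False
      then obtain B where B: "B \<subseteq> A" "B \<noteq> {}" "B \<noteq> A" "\<not> card B < card (\<Union>(N ` B))" by blast
      have cB: "card B = card (\<Union>(N ` B))" using B H by (meson le_neq_implies_less)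
      have finB: "finite B" using B fin finite_subset by blast
      have "card B < card A" using B fin by (meson psubsetI psubset_card_mono)
      moreover have "\<forall>x\<in>B. finite (N x)" using finN B by auto
      moreover have "\<forall>C\<subseteq>B. card C \<le> card (\<Union>(N ` C))" using H B by auto
      ultimately obtain f1 where f1: "inj_on f1 B" "\<forall>x\<in>B. f1 x \<in> N x"
        using less.hyps finB by blast
      define A2 where "A2 = A - B"
      define NB where "NB = \<Union>(N ` B)"
      define N2 where "N2 = (\<lambda>x. N x - NB)"
      have "A2 \<subset> A" using B unfolding A2_def by blast
      then have "card A2 < card A" using fin psubset_card_mono by blast
      moreover have "finite A2" unfolding A2_def using fin by simp
      moreover have "\<forall>x\<in>A2. finite (N2 x)" unfolding A2_def N2_def using finN by auto
      moreover have "\<forall>C\<subseteq>A2. card C \<le> card (\<Union>(N2 ` C))"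
      proof (intro allI impI)
        fix C assume C: "C \<subseteq> A2"
        have CB: "C \<union> B \<subseteq> A" "C \<inter> B = {}" using C B unfolding A2_def by auto
        have finC: "finite C" using C \<open>finite A2\<close> finite_subset by blast
        have "card C + card B = card (C \<union> B)" using CB finC finB by (simp add: card_Un_disjoint)
        also have "\<dots> \<le> card (\<Union>(N ` (C \<union> B)))" using H CB by blast
        also have "\<Union>(N ` (C \<union> B)) = \<Union>(N2 ` C) \<union> NB" unfolding N2_def NB_def by auto
        also have "card \<dots> = card (\<Union>(N2 ` C)) + card NB"
        proof (rule card_Un_disjoint)
          show "finite (\<Union>(N2 ` C))" using finU[of C] CB unfolding N2_def by (auto intro: finite_subset)
          show "finite NB" using finU[of B] B unfolding NB_def by auto
        qed (auto simp: N2_def)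
        finally show "card C \<le> card (\<Union>(N2 ` C))" using cB unfolding NB_def by linarith
      qed
      ultimately obtain f2 where f2: "inj_on f2 A2" "\<forall>x\<in>A2. f2 x \<in> N2 x"
        using less.hyps by blast
      define f where "f = (\<lambda>x. if x \<in> B then f1 x else f2 x)"
      have "inj_on f A"
      proof (rule inj_onI)
        fix x y assume xy: "x \<in> A" "y \<in> A" "f x = f y"
        show "x = y"
        proof (cases "x \<in> B"; cases "y \<in> B")
          assume "x \<in> B" "y \<in> B" then show ?thesis using xy f1(1) unfolding f_def by (auto dest: inj_onD)
        next
          assume "x \<notin> B" "y \<notin> B" then show ?thesis using xy f2(1) unfolding f_def A2_def by (auto dest: inj_onD)
        next
          assume a1: "x \<in> B" "y \<notin> B"
          then have "f1 x \<in> NB" using f1(2) unfolding NB_def by auto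
          moreover have "f2 y \<notin> NB" using f2(2) a1 xy unfolding N2_def A2_def by auto
          ultimately show ?thesis using xy a1 unfolding f_def by auto
        next
          assume a1: "x \<notin> B" "y \<in> B"
          then have "f1 y \<in> NB" using f1(2) unfolding NB_def by auto
          moreover have "f2 x \<notin> NB" using f2(2) a1 xy unfolding N2_def A2_def by auto
          ultimately show ?thesis using xy a1 unfolding f_def by auto
        qed
      qed
      moreover have "\<forall>x\<in>A. f x \<in> N x" using f1(2) f2(2) unfolding f_def A2_def N2_def by auto
      ultimately show ?thesis by blast
    qed
  qed
qed



lemma birk_aux:
  fixes c M :: "nat \<Rightarrow> nat \<Rightarrow> real"
  assumes L: "\<And>\<sigma>. bij_betw \<sigma> {..<k} {..<k} \<Longrightarrow> L \<le> (\<Sum>i<k. c i (\<sigma> i))"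
  shows "\<lbrakk>\<forall>i j. 0 \<le> M i j; \<forall>i<k. (\<Sum>j<k. M i j) = t; \<forall>j<k. (\<Sum>i<k. M i j) = t; 0 \<le> t\<rbrakk>
    \<Longrightarrow> t * L \<le> (\<Sum>i<k. \<Sum>j<k. M i j * c i j)"
proof (induction "card {(i,j). i<k \<and> j<k \<and> M i j \<noteq> 0}" arbitrary: M t rule: less_induct)
  case less
  note nn = less.prems(1) and row = less.prems(2) and col = less.prems(3) and t0 = less.prems(4)
  show ?case
  proof (cases "k = 0")
    case True
    have "bij_betw id {..<k} {..<k}" by simp
    from L[OF this] True show ?thesis using t0 by (simp add: mult_nonneg_nonpos)
  next
    case kpos: False
    show ?thesis
    proof (cases "t = 0")
      case True
      have "M i j = 0" if "i < k" "j < k" for i j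
      proof -
        have "(\<Sum>j<k. M i j) = 0" using row that True by auto
        then show ?thesis using sum_nonneg_eq_0_iff[of "{..<k}" "M i"] nn that by auto
      qed
      then have "(\<Sum>i<k. \<Sum>j<k. M i j * c i j) = 0" by simp
      then show ?thesis using True by simp
    next
      case False
      then have tpos: "t > 0" using t0 by simp
      define N where "N = (\<lambda>i. {j. j < k \<and> M i j > 0})"
      have "\<forall>B\<subseteq>{..<k}. card B \<le> card (\<Union>(N ` B))"
      proof (intro allI impI)
        fix B assume B: "B \<subseteq> {..<k}"
        define NB where "NB = \<Union>(N ` B)"
        have NBk: "NB \<subseteq> {..<k}" unfolding NB_def N_def by auto
        have finB: "finite B" using B finite_subset by blast
        have "t * card B = (\<Sum>i\<in>B. t)" by simp
        also have "\<dots> = (\<Sum>i\<in>B. \<Sum>j<k. M i j)" using row B by (intro sum.cong) auto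
        also have "\<dots> = (\<Sum>i\<in>B. \<Sum>j\<in>NB. M i j)"
        proof (rule sum.cong[OF refl])
          fix i assume i: "i \<in> B"
          show "(\<Sum>j<k. M i j) = (\<Sum>j\<in>NB. M i j)"
          proof (rule sum.mono_neutral_right)
            show "\<forall>j\<in>{..<k} - NB. M i j = 0"
              using i nn unfolding NB_def N_def by (auto simp: order.order_iff_strict)
          qed (use NBk in auto)
        qed
        also have "\<dots> = (\<Sum>j\<in>NB. \<Sum>i\<in>B. M i j)" by (rule sum.swap)
        also have "\<dots> \<le> (\<Sum>j\<in>NB. \<Sum>i<k. M i j)"
          by (rule sum_mono, rule sum_mono2) (use B nn in auto)
        also have "\<dots> = (\<Sum>j\<in>NB. t)" using col NBk by (intro sum.cong) auto
        also have "\<dots> = t * card NB" by simp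
        finally show "card B \<le> card (\<Union>(N ` B))" using tpos unfolding NB_def by simp
      qed
      then obtain \<sigma> where \<sigma>: "inj_on \<sigma> {..<k}" "\<forall>i\<in>{..<k}. \<sigma> i \<in> N i"
        using hall[of "{..<k}" N] unfolding N_def by auto
      have \<sigma>k: "\<sigma> ` {..<k} \<subseteq> {..<k}" and \<sigma>pos: "\<And>i. i < k \<Longrightarrow> M i (\<sigma> i) > 0"
        using \<sigma>(2) unfolding N_def by auto
      have bij: "bij_betw \<sigma> {..<k} {..<k}"
        using endo_inj_surj[OF _ \<sigma>k \<sigma>(1)] \<sigma>(1) by (simp add: bij_betw_def)
      define \<theta> where "\<theta> = Min ((\<lambda>i. M i (\<sigma> i)) ` {..<k})"
      obtain i0 where i0: "i0 < k" "M i0 (\<sigma> i0) = \<theta>"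
      proof -
        have "\<theta> \<in> (\<lambda>i. M i (\<sigma> i)) ` {..<k}" unfolding \<theta>_def using kpos by (intro Min_in) auto
        then show ?thesis using that by auto
      qed
      have \<theta>le: "\<theta> \<le> M i (\<sigma> i)" if "i < k" for i
        unfolding \<theta>_def using that by (intro Min_le) auto
      have \<theta>pos: "\<theta> > 0" using i0 \<sigma>pos by force
      have \<theta>t: "\<theta> \<le> t"
      proof -
        have "M i0 (\<sigma> i0) \<le> (\<Sum>j<k. M i0 j)"
          by (rule member_le_sum) (use nn \<sigma>k i0 in auto)
        then show ?thesis using row i0 by auto
      qed
      define M' where "M' = (\<lambda>i j. M i j - (if i < k \<and> j = \<sigma> i then \<theta> else 0))"
      have nn': "\<forall>i j. 0 \<le> M' i j"
        using \<theta>le nn unfolding M'_def by auto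
      have row': "\<forall>i<k. (\<Sum>j<k. M' i j) = t - \<theta>"
      proof (intro allI impI)
        fix i assume i: "i < k"
        have "(\<Sum>j<k. M' i j) = (\<Sum>j<k. M i j) - (\<Sum>j<k. (if j = \<sigma> i then \<theta> else 0))"
          unfolding M'_def using i by (simp add: sum_subtractf)
        also have "(\<Sum>j<k. (if j = \<sigma> i then \<theta> else 0)) = \<theta>" using \<sigma>k i by auto
        finally show "(\<Sum>j<k. M' i j) = t - \<theta>" using row i by simp
      qed
      have col': "\<forall>j<k. (\<Sum>i<k. M' i j) = t - \<theta>"
      proof (intro allI impI)
        fix j assume j: "j < k"
        have "(\<Sum>i<k. M' i j) = (\<Sum>i<k. M i j) - (\<Sum>i<k. (if j = \<sigma> i then \<theta> else 0))"
          unfolding M'_def by (simp add: sum_subtractf)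
        also have "(\<Sum>i<k. (if j = \<sigma> i then \<theta> else 0)) = (\<Sum>i'<k. (if j = i' then \<theta> else 0))"
          using sum.reindex_bij_betw[OF bij, of "\<lambda>i'. if j = i' then \<theta> else 0"] by simp
        also have "\<dots> = \<theta>" using j by auto
        finally show "(\<Sum>i<k. M' i j) = t - \<theta>" using col j by simp
      qed
      define S where "S = (\<lambda>M. {(i,j). i<k \<and> j<k \<and> (M i j::real) \<noteq> 0})"
      have "S M' \<subset> S M"
      proof
        show "S M' \<subseteq> S M" unfolding S_def M'_def
        proof (rule subsetI)
          fix x assume "x \<in> {(i, j). i < k \<and> j < k \<and> M i j - (if i < k \<and> j = \<sigma> i then \<theta> else 0) \<noteq> 0}"
          then obtain i j where x: "x = (i,j)" "i < k" "j < k" "M i j - (if i < k \<and> j = \<sigma> i then \<theta> else 0) \<noteq> 0" by blast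
          have "M i j \<noteq> 0"
          proof (cases "j = \<sigma> i")
            case True then show ?thesis using \<sigma>pos[of i] x by auto
          next
            case False then show ?thesis using x by auto
          qed
          then show "x \<in> {(i, j). i < k \<and> j < k \<and> M i j \<noteq> 0}" using x by auto
        qed
        have "(i0, \<sigma> i0) \<in> S M" using i0 \<sigma>k \<theta>pos unfolding S_def by auto
        moreover have "(i0, \<sigma> i0) \<notin> S M'" using i0 unfolding S_def M'_def by auto
        ultimately show "S M' \<noteq> S M" by blast
      qed
      moreover have "finite (S M)" unfolding S_def
        by (rule finite_subset[of _ "{..<k} \<times> {..<k}"]) auto
      ultimately have "card (S M') < card (S M)" by (rule psubset_card_mono[rotated])
      then have IH: "(t - \<theta>) * L \<le> (\<Sum>i<k. \<Sum>j<k. M' i j * c i j)"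
        using less.hyps[OF _ nn' row' col'] \<theta>t unfolding S_def by auto
      have "(\<Sum>i<k. \<Sum>j<k. M' i j * c i j) = (\<Sum>i<k. \<Sum>j<k. M i j * c i j) - (\<Sum>i<k. \<Sum>j<k. (if j = \<sigma> i then \<theta> else 0) * c i j)"
        unfolding M'_def by (simp add: sum_subtractf left_diff_distrib)
      also have "(\<Sum>i<k. \<Sum>j<k. (if j = \<sigma> i then \<theta> else 0) * c i j) = (\<Sum>i<k. \<theta> * c i (\<sigma> i))"
      proof (rule sum.cong[OF refl])
        fix i assume i: "i \<in> {..<k}"
        have "(\<Sum>j<k. (if j = \<sigma> i then \<theta> else 0) * c i j) = (\<Sum>j<k. (if j = \<sigma> i then \<theta> * c i j else 0))"
          by (intro sum.cong) auto
        also have "\<dots> = \<theta> * c i (\<sigma> i)" using \<sigma>k i by (auto simp: sum.delta image_subset_iff)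
        finally show "(\<Sum>j<k. (if j = \<sigma> i then \<theta> else 0) * c i j) = \<theta> * c i (\<sigma> i)" .
      qed
      also have "\<dots> = \<theta> * (\<Sum>i<k. c i (\<sigma> i))" by (simp add: sum_distrib_left)
      finally have "(t - \<theta>) * L \<le> (\<Sum>i<k. \<Sum>j<k. M i j * c i j) - \<theta> * (\<Sum>i<k. c i (\<sigma> i))"
        using IH by simp
      moreover have "\<theta> * L \<le> \<theta> * (\<Sum>i<k. c i (\<sigma> i))" using L[OF bij] \<theta>pos by simp
      ultimately show ?thesis by (simp add: algebra_simps)
    qed
  qed
qed



lemma sum_nth_count:
  fixes f :: "'a::finite \<Rightarrow> real"
  shows "(\<Sum>i<length xs. f (xs!i)) = (\<Sum>y\<in>UNIV. real (count (mset xs) y) * f y)"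
proof (induction xs)
  case Nil then show ?case by simp
next
  case (Cons x xs)
  have "(\<Sum>i<length (x#xs). f ((x#xs)!i)) = f x + (\<Sum>i<length xs. f (xs!i))"
    unfolding length_Cons sum.lessThan_Suc_shift by simp
  also have "\<dots> = f x + (\<Sum>y\<in>UNIV. real (count (mset xs) y) * f y)" using Cons by simp
  also have "\<dots> = (\<Sum>y\<in>UNIV. (if y = x then f y else 0) + real (count (mset xs) y) * f y)"
    by (simp add: sum.distrib)
  also have "\<dots> = (\<Sum>y\<in>UNIV. real (count (mset (x#xs)) y) * f y)"
    by (intro sum.cong) (auto simp: algebra_simps)
  finally show ?case .
qed

lemma dk_set_finite:
  "finite {(\<Sum>i<size U. dist (xs ! i) (ys ! i)) | xs ys. mset xs = U \<and> mset ys = (V::'a::{finite,metric_space} multiset)}"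
proof -
  define A where "A = {xs::'a list. set xs \<subseteq> UNIV \<and> length xs = size U}"
  define B where "B = {ys::'a list. set ys \<subseteq> UNIV \<and> length ys = size V}"
  define F where "F = (\<lambda>(xs::'a list,ys::'a list). \<Sum>i<size U. dist (xs ! i) (ys ! i))"
  have "{(\<Sum>i<size U. dist (xs ! i) (ys ! i)) | xs ys. mset xs = U \<and> mset ys = V} \<subseteq> F ` (A \<times> B)"
  proof
    fix x assume "x \<in> {(\<Sum>i<size U. dist (xs ! i) (ys ! i)) | xs ys. mset xs = U \<and> mset ys = V}"
    then obtain xs ys where x: "x = (\<Sum>i<size U. dist (xs ! i) (ys ! i))" "mset xs = U" "mset ys = V" by blast
    show "x \<in> F ` (A \<times> B)"
    proof (rule rev_image_eqI)
      show "(xs,ys) \<in> A \<times> B" using x unfolding A_def B_def by auto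
    qed (simp add: x F_def)
  qed
  moreover have "finite (F ` (A \<times> B))" unfolding A_def B_def
    by (intro finite_imageI finite_cartesian_product finite_lists_length_eq) auto
  ultimately show ?thesis by (rule finite_subset)
qed

lemma dk_le:
  fixes xs ys :: "'a::{finite,metric_space} list"
  shows "dk (mset xs) (mset ys) \<le> (\<Sum>i<length xs. dist (xs ! i) (ys ! i))"
  unfolding dk_def by (rule Min_le[OF dk_set_finite]) auto

lemma dk_attained:
  fixes U V :: "'a::{finite,metric_space} multiset"
  shows "\<exists>xs ys. mset xs = U \<and> mset ys = V \<and> dk U V = (\<Sum>i<size U. dist (xs ! i) (ys ! i))"
proof -
  obtain xs ys where "mset xs = U" "mset ys = V" using ex_mset by metis
  then have "{(\<Sum>i<size U. dist (xs ! i) (ys ! i)) | xs ys. mset xs = U \<and> mset ys = V} \<noteq> {}" by blast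
  from Min_in[OF dk_set_finite this] show ?thesis unfolding dk_def by blast
qed

lemma dk_fix_right:
  fixes U :: "'a::{finite,metric_space} multiset" and zs :: "'a list"
  assumes "size U = length zs"
  shows "\<exists>xs. mset xs = U \<and> dk U (mset zs) = (\<Sum>i<length zs. dist (xs ! i) (zs ! i))"
proof -
  obtain xs0 ys0 where x0: "mset xs0 = U" "mset ys0 = mset zs" "dk U (mset zs) = (\<Sum>i<size U. dist (xs0 ! i) (ys0 ! i))"
    using dk_attained by blast
  have l1: "length xs0 = length zs" using x0(1) assms size_mset by metis
  have l2: "length ys0 = length zs" using x0(2) mset_eq_length by blast
  obtain p where p: "p permutes {..<length ys0}" "permute_list p ys0 = zs"
    using mset_eq_permutation[of zs ys0, OF x0(2)[symmetric]] by blast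
  have p': "p permutes {..<length xs0}" using p(1) l1 l2 by simp
  define xs where "xs = permute_list p xs0"
  have m: "mset xs = U" unfolding xs_def using p' x0(1) by simp
  have "(\<Sum>i<length zs. dist (xs ! i) (zs ! i)) = (\<Sum>i<length zs. dist (xs0 ! p i) (ys0 ! p i))"
  proof (rule sum.cong[OF refl])
    fix i assume i: "i \<in> {..<length zs}"
    have "xs ! i = xs0 ! p i" unfolding xs_def using permute_list_nth[OF p'] i l1 by simp
    moreover have "zs ! i = ys0 ! p i" using permute_list_nth[OF p(1), of i] i l2 unfolding p(2) by simp
    ultimately show "dist (xs ! i) (zs ! i) = dist (xs0 ! p i) (ys0 ! p i)" by simp
  qed
  also have "\<dots> = (\<Sum>i<length zs. dist (xs0 ! i) (ys0 ! i))"
  proof -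
    have "p permutes {..<length zs}" using p(1) l2 by simp
    from sum.permute[OF this, of "\<lambda>i. dist (xs0 ! i) (ys0 ! i)"] show ?thesis by (simp add: comp_def)
  qed
  also have "\<dots> = dk U (mset zs)" using x0(3) assms by simp
  finally show ?thesis using m by metis
qed

lemma dk_sym:
  fixes U V :: "'a::{finite,metric_space} multiset"
  assumes "size U = size V"
  shows "dk U V = dk V U"
proof -
  have "{(\<Sum>i<size U. dist (xs ! i) (ys ! i)) | xs ys. mset xs = U \<and> mset ys = V}
     = {(\<Sum>i<size V. dist (xs ! i) (ys ! i)) | xs ys. mset xs = V \<and> mset ys = U}"
  proof (intro antisym subsetI)
    fix x assume "x \<in> {(\<Sum>i<size U. dist (xs ! i) (ys ! i)) | xs ys. mset xs = U \<and> mset ys = V}"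
    then obtain xs ys where x: "x = (\<Sum>i<size U. dist (xs ! i) (ys ! i))" "mset xs = U" "mset ys = V" by blast
    have "x = (\<Sum>i<size V. dist (ys ! i) (xs ! i))" using x assms by (simp add: dist_commute)
    then show "x \<in> {(\<Sum>i<size V. dist (xs ! i) (ys ! i)) | xs ys. mset xs = V \<and> mset ys = U}" using x by blast
  next
    fix x assume "x \<in> {(\<Sum>i<size V. dist (xs ! i) (ys ! i)) | xs ys. mset xs = V \<and> mset ys = U}"
    then obtain xs ys where x: "x = (\<Sum>i<size V. dist (xs ! i) (ys ! i))" "mset xs = V" "mset ys = U" by blast
    have "x = (\<Sum>i<size U. dist (ys ! i) (xs ! i))" using x assms by (simp add: dist_commute)
    then show "x \<in> {(\<Sum>i<size U. dist (xs ! i) (ys ! i)) | xs ys. mset xs = U \<and> mset ys = V}" using x by blast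
  qed
  then show ?thesis unfolding dk_def by simp
qed

lemma dk_nonneg:
  fixes U V :: "'a::{finite,metric_space} multiset"
  shows "0 \<le> dk U V"
  using dk_attained[of U V] by (auto intro!: sum_nonneg)

lemma dk_triangle:
  fixes S Q X :: "'a::{finite,metric_space} multiset"
  assumes "size S = size Q" "size X = size Q"
  shows "dk S X \<le> dk S Q + dk Q X"
proof -
  obtain ys where ys: "mset ys = Q" using ex_mset by blast
  have l: "length ys = size Q" using ys by auto
  obtain xs where xs: "mset xs = S" "dk S Q = (\<Sum>i<length ys. dist (xs ! i) (ys ! i))"
    using dk_fix_right[of S ys] assms ys l by auto
  obtain zs where zs: "mset zs = X" "dk X Q = (\<Sum>i<length ys. dist (zs ! i) (ys ! i))"
    using dk_fix_right[of X ys] assms ys l by auto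
  have lx: "length xs = length ys" using xs assms l by (metis size_mset)
  have "dk S X \<le> (\<Sum>i<length xs. dist (xs ! i) (zs ! i))" using dk_le[of xs zs] xs zs by simp
  also have "\<dots> \<le> (\<Sum>i<length ys. dist (xs ! i) (ys ! i) + dist (zs ! i) (ys ! i))"
    unfolding lx by (intro sum_mono) (rule dist_triangle2)
  also have "\<dots> = dk S Q + dk X Q" using xs zs by (simp add: sum.distrib)
  finally show ?thesis using dk_sym[of Q X] assms by simp
qed

lemma dk_perm:
  fixes s os :: "'a::{finite,metric_space} list"
  assumes "length s = k" "length os = k" "bij_betw \<sigma> {..<k} {..<k}"
  shows "dk (mset s) (mset os) \<le> (\<Sum>i<k. dist (s ! i) (os ! \<sigma> i))"
proof -
  define ys where "ys = map (\<lambda>i. os ! \<sigma> i) [0..<k]"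
  have "mset ys = image_mset (nth os) (image_mset \<sigma> (mset_set {..<k}))"
    unfolding ys_def by (simp add: image_mset.compositionality comp_def atLeast0LessThan)
  also have "image_mset \<sigma> (mset_set {..<k}) = mset_set {..<k}"
    using assms(3) by (simp add: image_mset_mset_set bij_betw_def)
  also have "image_mset (nth os) (mset_set {..<k}) = mset (map (nth os) [0..<k])"
    by (simp add: atLeast0LessThan)
  also have "map (nth os) [0..<k] = os" using assms(2) map_nth by metis
  finally have m: "mset ys = mset os" .
  have "dk (mset s) (mset ys) \<le> (\<Sum>i<length s. dist (s ! i) (ys ! i))" by (rule dk_le)
  also have "\<dots> = (\<Sum>i<k. dist (s ! i) (os ! \<sigma> i))" using assms(1) by (intro sum.cong) (auto simp: ys_def)
  finally show ?thesis using m by simp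
qed



lemma marg_fst:
  fixes \<pi> :: "('a::finite \<times> 'b::finite) pmf"
  shows "pmf (map_pmf fst \<pi>) x = (\<Sum>z\<in>UNIV. pmf \<pi> (x,z))"
proof -
  have "pmf (map_pmf fst \<pi>) x = measure \<pi> (fst -` {x})" by (rule pmf_map)
  also have "\<dots> = sum (pmf \<pi>) (fst -` {x})" by (rule measure_measure_pmf_finite) simp
  also have "fst -` {x} = Pair x ` UNIV" by auto
  also have "sum (pmf \<pi>) (Pair x ` UNIV) = (\<Sum>z\<in>UNIV. pmf \<pi> (x,z))"
    by (subst sum.reindex) (auto simp: inj_on_def)
  finally show ?thesis .
qed

lemma marg_snd:
  fixes \<pi> :: "('a::finite \<times> 'b::finite) pmf"
  shows "pmf (map_pmf snd \<pi>) z = (\<Sum>x\<in>UNIV. pmf \<pi> (x,z))"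
proof -
  have "pmf (map_pmf snd \<pi>) z = measure \<pi> (snd -` {z})" by (rule pmf_map)
  also have "\<dots> = sum (pmf \<pi>) (snd -` {z})" by (rule measure_measure_pmf_finite) simp
  also have "snd -` {z} = (\<lambda>x. (x,z)) ` UNIV" by auto
  also have "sum (pmf \<pi>) ((\<lambda>x. (x,z)) ` UNIV) = (\<Sum>x\<in>UNIV. pmf \<pi> (x,z))"
    by (subst sum.reindex) (auto simp: inj_on_def)
  finally show ?thesis .
qed

lemma exp_fin:
  fixes \<pi> :: "('a::finite \<times> 'b::finite) pmf" and f :: "'a \<times> 'b \<Rightarrow> real"
  shows "measure_pmf.expectation \<pi> f = (\<Sum>x\<in>UNIV. \<Sum>z\<in>UNIV. pmf \<pi> (x,z) * f (x,z))"
proof -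
  have "measure_pmf.expectation \<pi> f = (\<Sum>w\<in>UNIV. pmf \<pi> w *\<^sub>R f w)"
    by (rule integral_measure_pmf) auto
  also have "\<dots> = (\<Sum>(x,z)\<in>UNIV \<times> UNIV. pmf \<pi> (x,z) * f (x,z))" by (simp add: case_prod_beta')
  also have "\<dots> = (\<Sum>x\<in>UNIV. \<Sum>z\<in>UNIV. pmf \<pi> (x,z) * f (x,z))" by (rule sum.cartesian_product[symmetric])
  finally show ?thesis .
qed

lemma coup_alpha:
  fixes \<pi> :: "('a::{finite,metric_space} \<times> 'a) pmf" and u :: "'a list"
  assumes cp: "\<pi> \<in> couplings (DT (mset u)) P" and len: "length u = k" and k: "k \<ge> 1"
  defines "\<alpha> \<equiv> \<lambda>i z. pmf \<pi> (u!i, z) / real (count (mset u) (u!i))"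
  shows "\<forall>i z. 0 \<le> \<alpha> i z"
    and "\<forall>i<k. (\<Sum>z\<in>UNIV. \<alpha> i z) = 1 / k"
    and "\<And>z h. (\<Sum>i<k. \<alpha> i z * h (u!i)) = (\<Sum>x\<in>UNIV. pmf \<pi> (x,z) * h x)"
    and "\<forall>z. (\<Sum>i<k. \<alpha> i z) = pmf P z"
proof -
  have ne: "mset u \<noteq> {#}" using len k by auto
  have fstm: "map_pmf fst \<pi> = pmf_of_multiset (mset u)" and sndm: "map_pmf snd \<pi> = P"
    using cp unfolding couplings_def DT_def by auto
  have rowx: "(\<Sum>z\<in>UNIV. pmf \<pi> (x,z)) = real (count (mset u) x) / k" for x
    using marg_fst[of \<pi> x] fstm ne len by simp
  have zero: "pmf \<pi> (x,z) = 0" if "count (mset u) x = 0" for x z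
  proof -
    have "pmf \<pi> (x,z) \<le> (\<Sum>z\<in>UNIV. pmf \<pi> (x,z))" by (rule member_le_sum) auto
    then show ?thesis using rowx[of x] that pmf_nonneg[of \<pi> "(x,z)"] by simp
  qed
  show "\<forall>i z. 0 \<le> \<alpha> i z" unfolding \<alpha>_def by auto
  show "\<forall>i<k. (\<Sum>z\<in>UNIV. \<alpha> i z) = 1 / k"
  proof (intro allI impI)
    fix i assume i: "i < k"
    have "u ! i \<in># mset u" using i len by simp
    then have c: "real (count (mset u) (u!i)) > 0" by simp
    have "(\<Sum>z\<in>UNIV. \<alpha> i z) = (\<Sum>z\<in>UNIV. pmf \<pi> (u!i, z)) / real (count (mset u) (u!i))"
      unfolding \<alpha>_def by (simp add: sum_divide_distrib)
    also have "\<dots> = 1 / k" using rowx[of "u!i"] c by simp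
    finally show "(\<Sum>z\<in>UNIV. \<alpha> i z) = 1 / k" .
  qed
  show gen: "(\<Sum>i<k. \<alpha> i z * h (u!i)) = (\<Sum>x\<in>UNIV. pmf \<pi> (x,z) * h x)" for z h
  proof -
    have "(\<Sum>i<k. \<alpha> i z * h (u!i)) = (\<Sum>i<length u. (\<lambda>x. pmf \<pi> (x, z) / real (count (mset u) x) * h x) (u!i))"
      unfolding \<alpha>_def len by simp
    also have "\<dots> = (\<Sum>x\<in>UNIV. real (count (mset u) x) * (pmf \<pi> (x, z) / real (count (mset u) x) * h x))"
      by (rule sum_nth_count)
    also have "\<dots> = (\<Sum>x\<in>UNIV. pmf \<pi> (x,z) * h x)"
    proof (rule sum.cong[OF refl])
      fix x
      show "real (count (mset u) x) * (pmf \<pi> (x, z) / real (count (mset u) x) * h x) = pmf \<pi> (x,z) * h x"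
        using zero[of x z] by (cases "count (mset u) x = 0") auto
    qed
    finally show ?thesis .
  qed
  show "\<forall>z. (\<Sum>i<k. \<alpha> i z) = pmf P z"
  proof
    fix z
    have "(\<Sum>i<k. \<alpha> i z) = (\<Sum>i<k. \<alpha> i z * (\<lambda>_. 1) (u!i))" by simp
    also have "\<dots> = (\<Sum>x\<in>UNIV. pmf \<pi> (x,z))" using gen[of z "\<lambda>_. 1"] by simp
    also have "\<dots> = pmf P z" using marg_snd[of \<pi> z] sndm by simp
    finally show "(\<Sum>i<k. \<alpha> i z) = pmf P z" .
  qed
qed



lemma glue:
  fixes \<alpha> \<beta> :: "nat \<Rightarrow> 'a::{finite,metric_space} \<Rightarrow> real" and p :: "'a \<Rightarrow> real"
    and a b :: "nat \<Rightarrow> 'a"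
  assumes an: "\<forall>i z. 0 \<le> \<alpha> i z" and bn: "\<forall>j z. 0 \<le> \<beta> j z"
    and ar: "\<forall>i<k. (\<Sum>z\<in>UNIV. \<alpha> i z) = t" and br: "\<forall>j<k. (\<Sum>z\<in>UNIV. \<beta> j z) = t"
    and ac: "\<forall>z. (\<Sum>i<k. \<alpha> i z) = p z" and bc: "\<forall>z. (\<Sum>j<k. \<beta> j z) = p z"
  defines "X \<equiv> \<lambda>i j z. (if p z = 0 then 0 else \<alpha> i z * \<beta> j z / p z)"
  defines "M \<equiv> \<lambda>i j. \<Sum>z\<in>UNIV. X i j z"
  shows "\<forall>i j. 0 \<le> M i j" "\<forall>i<k. (\<Sum>j<k. M i j) = t" "\<forall>j<k. (\<Sum>i<k. M i j) = t"
    "(\<Sum>i<k. \<Sum>j<k. M i j * dist (a i) (b j))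
       \<le> (\<Sum>i<k. \<Sum>z\<in>UNIV. \<alpha> i z * dist (a i) z) + (\<Sum>j<k. \<Sum>z\<in>UNIV. \<beta> j z * dist z (b j))"
proof -
  have pn: "0 \<le> p z" for z using ac an by (metis sum_nonneg)
  have a0: "\<alpha> i z = 0" if "p z = 0" "i < k" for i z
    using sum_nonneg_eq_0_iff[of "{..<k}" "\<lambda>i. \<alpha> i z"] ac an that by auto
  have b0: "\<beta> j z = 0" if "p z = 0" "j < k" for j z
    using sum_nonneg_eq_0_iff[of "{..<k}" "\<lambda>j. \<beta> j z"] bc bn that by auto
  have Xn: "0 \<le> X i j z" for i j z unfolding X_def using an bn pn by auto
  have Xrow: "(\<Sum>j<k. X i j z) = \<alpha> i z" if "i < k" for i z
  proof (cases "p z = 0")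
    case True then show ?thesis using a0 that unfolding X_def by simp
  next
    case False
    have "(\<Sum>j<k. X i j z) = \<alpha> i z * (\<Sum>j<k. \<beta> j z) / p z"
      unfolding X_def using False by (simp add: sum_distrib_left sum_divide_distrib)
    then show ?thesis using bc False by simp
  qed
  have Xcol: "(\<Sum>i<k. X i j z) = \<beta> j z" if "j < k" for j z
  proof (cases "p z = 0")
    case True then show ?thesis using b0 that unfolding X_def by simp
  next
    case False
    have "(\<Sum>i<k. X i j z) = (\<Sum>i<k. \<alpha> i z) * \<beta> j z / p z"
      unfolding X_def using False by (simp add: sum_distrib_right sum_divide_distrib)
    then show ?thesis using ac False by simp
  qed
  show "\<forall>i j. 0 \<le> M i j" unfolding M_def using Xn by (auto intro: sum_nonneg)
  show "\<forall>i<k. (\<Sum>j<k. M i j) = t"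
  proof (intro allI impI)
    fix i assume i: "i < k"
    have "(\<Sum>j<k. M i j) = (\<Sum>z\<in>UNIV. \<Sum>j<k. X i j z)" unfolding M_def by (rule sum.swap)
    also have "\<dots> = (\<Sum>z\<in>UNIV. \<alpha> i z)" using Xrow i by simp
    finally show "(\<Sum>j<k. M i j) = t" using ar i by simp
  qed
  show "\<forall>j<k. (\<Sum>i<k. M i j) = t"
  proof (intro allI impI)
    fix j assume j: "j < k"
    have "(\<Sum>i<k. M i j) = (\<Sum>z\<in>UNIV. \<Sum>i<k. X i j z)" unfolding M_def by (rule sum.swap)
    also have "\<dots> = (\<Sum>z\<in>UNIV. \<beta> j z)" using Xcol j by simp
    finally show "(\<Sum>i<k. M i j) = t" using br j by simp
  qed
  have "(\<Sum>i<k. \<Sum>j<k. M i j * dist (a i) (b j))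
      = (\<Sum>i<k. \<Sum>j<k. \<Sum>z\<in>UNIV. X i j z * dist (a i) (b j))"
    unfolding M_def by (simp add: sum_distrib_right)
  also have "\<dots> \<le> (\<Sum>i<k. \<Sum>j<k. \<Sum>z\<in>UNIV. X i j z * dist (a i) z + X i j z * dist z (b j))"
  proof (intro sum_mono)
    fix i j z
    have "X i j z * dist (a i) (b j) \<le> X i j z * (dist (a i) z + dist z (b j))"
      using Xn by (intro mult_left_mono dist_triangle) auto
    then show "X i j z * dist (a i) (b j) \<le> X i j z * dist (a i) z + X i j z * dist z (b j)"
      by (simp add: algebra_simps)
  qed
  also have "\<dots> = (\<Sum>i<k. \<Sum>j<k. \<Sum>z\<in>UNIV. X i j z * dist (a i) z) + (\<Sum>i<k. \<Sum>j<k. \<Sum>z\<in>UNIV. X i j z * dist z (b j))"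
    by (simp add: sum.distrib)
  also have "(\<Sum>i<k. \<Sum>j<k. \<Sum>z\<in>UNIV. X i j z * dist (a i) z) = (\<Sum>i<k. \<Sum>z\<in>UNIV. \<alpha> i z * dist (a i) z)"
  proof (rule sum.cong[OF refl])
    fix i assume i: "i \<in> {..<k}"
    have "(\<Sum>j<k. \<Sum>z\<in>UNIV. X i j z * dist (a i) z) = (\<Sum>z\<in>UNIV. (\<Sum>j<k. X i j z) * dist (a i) z)"
      by (subst sum.swap) (simp add: sum_distrib_right)
    also have "\<dots> = (\<Sum>z\<in>UNIV. \<alpha> i z * dist (a i) z)" using Xrow i by simp
    finally show "(\<Sum>j<k. \<Sum>z\<in>UNIV. X i j z * dist (a i) z) = (\<Sum>z\<in>UNIV. \<alpha> i z * dist (a i) z)" .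
  qed
  also have "(\<Sum>i<k. \<Sum>j<k. \<Sum>z\<in>UNIV. X i j z * dist z (b j)) = (\<Sum>j<k. \<Sum>z\<in>UNIV. \<beta> j z * dist z (b j))"
  proof -
    have "(\<Sum>i<k. \<Sum>j<k. \<Sum>z\<in>UNIV. X i j z * dist z (b j)) = (\<Sum>j<k. \<Sum>i<k. \<Sum>z\<in>UNIV. X i j z * dist z (b j))"
      by (rule sum.swap)
    also have "\<dots> = (\<Sum>j<k. \<Sum>z\<in>UNIV. \<beta> j z * dist z (b j))"
    proof (rule sum.cong[OF refl])
      fix j assume j: "j \<in> {..<k}"
      have "(\<Sum>i<k. \<Sum>z\<in>UNIV. X i j z * dist z (b j)) = (\<Sum>z\<in>UNIV. (\<Sum>i<k. X i j z) * dist z (b j))"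
        by (subst sum.swap) (simp add: sum_distrib_right)
      also have "\<dots> = (\<Sum>z\<in>UNIV. \<beta> j z * dist z (b j))" using Xcol j by simp
      finally show "(\<Sum>i<k. \<Sum>z\<in>UNIV. X i j z * dist z (b j)) = (\<Sum>z\<in>UNIV. \<beta> j z * dist z (b j))" .
    qed
    finally show ?thesis .
  qed
  finally show "(\<Sum>i<k. \<Sum>j<k. M i j * dist (a i) (b j))
       \<le> (\<Sum>i<k. \<Sum>z\<in>UNIV. \<alpha> i z * dist (a i) z) + (\<Sum>j<k. \<Sum>z\<in>UNIV. \<beta> j z * dist z (b j))" .
qed



lemma dk_upper:
  fixes S Q :: "'a::{finite,metric_space} multiset"
  assumes szS: "size S = k" and szQ: "size Q = k" and k: "k \<ge> 1"
    and c1: "\<pi>1 \<in> couplings (DT S) P" and c2: "\<pi>2 \<in> couplings (DT Q) P"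
  shows "dk S Q \<le> k * (measure_pmf.expectation \<pi>1 (\<lambda>(x,y). dist x y) + measure_pmf.expectation \<pi>2 (\<lambda>(x,y). dist x y))"
proof -
  obtain s where s: "mset s = S" using ex_mset by blast
  obtain os where os: "mset os = Q" using ex_mset by blast
  have ls: "length s = k" using s szS by auto
  have los: "length os = k" using os szQ by auto
  have c1': "\<pi>1 \<in> couplings (DT (mset s)) P" using c1 s by simp
  have c2': "\<pi>2 \<in> couplings (DT (mset os)) P" using c2 os by simp
  define \<alpha> where "\<alpha> = (\<lambda>i z. pmf \<pi>1 (s!i, z) / real (count (mset s) (s!i)))"
  define \<beta> where "\<beta> = (\<lambda>i z. pmf \<pi>2 (os!i, z) / real (count (mset os) (os!i)))"
  have A1: "\<forall>i z. 0 \<le> \<alpha> i z" unfolding \<alpha>_def by (rule coup_alpha(1)[OF c1' ls k])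
  have A2: "\<forall>i<k. (\<Sum>z\<in>UNIV. \<alpha> i z) = 1 / k" unfolding \<alpha>_def by (rule coup_alpha(2)[OF c1' ls k])
  have A3: "\<And>z h. (\<Sum>i<k. \<alpha> i z * h (s!i)) = (\<Sum>x\<in>UNIV. pmf \<pi>1 (x,z) * h x)" unfolding \<alpha>_def by (rule coup_alpha(3)[OF c1' ls k])
  have A4: "\<forall>z. (\<Sum>i<k. \<alpha> i z) = pmf P z" unfolding \<alpha>_def by (rule coup_alpha(4)[OF c1' ls k])
  have B1: "\<forall>i z. 0 \<le> \<beta> i z" unfolding \<beta>_def by (rule coup_alpha(1)[OF c2' los k])
  have B2: "\<forall>i<k. (\<Sum>z\<in>UNIV. \<beta> i z) = 1 / k" unfolding \<beta>_def by (rule coup_alpha(2)[OF c2' los k])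
  have B3: "\<And>z h. (\<Sum>i<k. \<beta> i z * h (os!i)) = (\<Sum>x\<in>UNIV. pmf \<pi>2 (x,z) * h x)" unfolding \<beta>_def by (rule coup_alpha(3)[OF c2' los k])
  have B4: "\<forall>z. (\<Sum>i<k. \<beta> i z) = pmf P z" unfolding \<beta>_def by (rule coup_alpha(4)[OF c2' los k])
  define M where "M = (\<lambda>i j. \<Sum>z\<in>UNIV. if pmf P z = 0 then 0 else \<alpha> i z * \<beta> j z / pmf P z)"
  have Mij: "\<And>i j. M i j = (\<Sum>z\<in>UNIV. if pmf P z = 0 then 0 else \<alpha> i z * \<beta> j z / pmf P z)"
    unfolding M_def by simp
  note G = glue(1-3)[OF A1 B1 A2 B2 A4 B4, folded Mij]
  note G4 = glue(4)[OF A1 B1 A2 B2 A4 B4, of "\<lambda>i. s!i" "\<lambda>j. os!j", folded Mij]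
  have L: "dk S Q \<le> (\<Sum>i<k. (\<lambda>i j. dist (s!i) (os!j)) i (\<sigma> i))" if "bij_betw \<sigma> {..<k} {..<k}" for \<sigma>
    using dk_perm[OF ls los that] s os by simp
  have "(1 / k) * dk S Q \<le> (\<Sum>i<k. \<Sum>j<k. M i j * (\<lambda>i j. dist (s!i) (os!j)) i j)"
    by (rule birk_aux[of k "dk S Q" "\<lambda>i j. dist (s!i) (os!j)" M "1/k", OF L G(1) G(2) G(3)]) (blast, simp add: zero_le_divide_iff)
  also have "\<dots> \<le> (\<Sum>i<k. \<Sum>z\<in>UNIV. \<alpha> i z * dist (s!i) z) + (\<Sum>j<k. \<Sum>z\<in>UNIV. \<beta> j z * dist z (os!j))"
    using G4 by simp
  also have "(\<Sum>i<k. \<Sum>z\<in>UNIV. \<alpha> i z * dist (s!i) z) = measure_pmf.expectation \<pi>1 (\<lambda>(x,y). dist x y)"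
  proof -
    have "(\<Sum>i<k. \<Sum>z\<in>UNIV. \<alpha> i z * dist (s!i) z) = (\<Sum>z\<in>UNIV. \<Sum>i<k. \<alpha> i z * (\<lambda>x. dist x z) (s!i))"
      by (subst sum.swap) simp
    also have "\<dots> = (\<Sum>z\<in>UNIV. \<Sum>x\<in>UNIV. pmf \<pi>1 (x,z) * dist x z)"
      by (rule sum.cong[OF refl]) (use A3[of _ "\<lambda>x. dist x _"] in simp)
    also have "\<dots> = (\<Sum>x\<in>UNIV. \<Sum>z\<in>UNIV. pmf \<pi>1 (x,z) * dist x z)" by (rule sum.swap)
    also have "\<dots> = measure_pmf.expectation \<pi>1 (\<lambda>(x,y). dist x y)" by (simp add: exp_fin)
    finally show ?thesis .
  qed
  also have "(\<Sum>j<k. \<Sum>z\<in>UNIV. \<beta> j z * dist z (os!j)) = measure_pmf.expectation \<pi>2 (\<lambda>(x,y). dist x y)"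
  proof -
    have "(\<Sum>j<k. \<Sum>z\<in>UNIV. \<beta> j z * dist z (os!j)) = (\<Sum>z\<in>UNIV. \<Sum>i<k. \<beta> i z * (\<lambda>x. dist x z) (os!i))"
      by (subst sum.swap) (simp add: dist_commute)
    also have "\<dots> = (\<Sum>z\<in>UNIV. \<Sum>x\<in>UNIV. pmf \<pi>2 (x,z) * dist x z)"
      by (rule sum.cong[OF refl]) (use B3[of _ "\<lambda>x. dist x _"] in simp)
    also have "\<dots> = (\<Sum>x\<in>UNIV. \<Sum>z\<in>UNIV. pmf \<pi>2 (x,z) * dist x z)" by (rule sum.swap)
    also have "\<dots> = measure_pmf.expectation \<pi>2 (\<lambda>(x,y). dist x y)" by (simp add: exp_fin)
    finally show ?thesis .
  qed
  finally show ?thesis using k by (simp add: field_simps)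
qed



lemma rep_nth: "i < n \<Longrightarrow> map_pmf (\<lambda>X. X ! i) (replicate_pmf n P) = P"
proof (induction n arbitrary: i)
  case 0 then show ?case by simp
next
  case (Suc n)
  show ?case
  proof (cases i)
    case 0
    then show ?thesis
      by (simp add: map_bind_pmf map_pmf_comp bind_return_pmf')
  next
    case (Suc j)
    then have "j < n" using Suc.prems by simp
    have "map_pmf (\<lambda>X. X ! i) (replicate_pmf (Suc n) P) = bind_pmf P (\<lambda>x. map_pmf (\<lambda>X. X ! j) (replicate_pmf n P))"
      using Suc by (simp add: map_bind_pmf map_pmf_def[symmetric] map_pmf_comp)
    also have "\<dots> = P" using Suc.IH[OF \<open>j < n\<close>] by simp
    finally show ?thesis .
  qed
qed

lemma nth_uniform:
  assumes "length xs = k" "k \<ge> 1"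
  shows "map_pmf (\<lambda>i. xs ! i) (pmf_of_set {..<k}) = pmf_of_multiset (mset xs)"
proof -
  have "map_pmf (\<lambda>i. xs ! i) (pmf_of_set {..<k}) = pmf_of_multiset (image_mset (nth xs) (mset_set {..<k}))"
  proof (rule map_pmf_of_set)
    have "0 \<in> {..<k}" using assms(2) by simp
    then show "{..<k} \<noteq> {}" by blast
  qed simp
  also have "image_mset (nth xs) (mset_set {..<k}) = mset (map (nth xs) [0..<k])"
    by (simp add: atLeast0LessThan)
  also have "map (nth xs) [0..<k] = xs" using assms(1) map_nth by metis
  finally show ?thesis .
qed

lemma finite_rep: "finite (set_pmf (replicate_pmf k (P::'a::finite pmf)))"
proof -
  have "set_pmf (replicate_pmf k P) \<subseteq> {xs. set xs \<subseteq> UNIV \<and> length xs = k}"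
    by (auto simp: set_replicate_pmf)
  moreover have "finite {xs::'a list. set xs \<subseteq> UNIV \<and> length xs = k}"
    by (rule finite_lists_length_eq) simp
  ultimately show ?thesis by (rule finite_subset)
qed

lemma exp_nonneg: "0 \<le> measure_pmf.expectation (\<pi>::('a::metric_space \<times> 'a) pmf) (\<lambda>(x,y). dist x y)"
  by (rule Bochner_Integration.integral_nonneg) (auto simp: case_prod_beta)

lemma couplings_ne: "couplings \<mu> \<nu> \<noteq> {}"
  unfolding couplings_def using map_fst_pair_pmf map_snd_pair_pmf by blast

lemma wass_nonneg: "0 \<le> wasserstein \<mu> \<nu>"
  unfolding wasserstein_def by (rule cINF_greatest[OF couplings_ne exp_nonneg])

lemma wass_le: "\<pi> \<in> couplings \<mu> \<nu> \<Longrightarrow> wasserstein \<mu> \<nu> \<le> measure_pmf.expectation \<pi> (\<lambda>(x,y). dist x y)"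
  unfolding wasserstein_def by (rule cINF_lower) (auto intro: bdd_belowI2[OF exp_nonneg])

lemma lower:
  fixes Q :: "'a::{finite,metric_space} multiset"
  assumes szQ: "size Q = k" and k: "k \<ge> 1"
  shows "k * wasserstein (DT Q) P \<le> rp_cost k P Q"
proof -
  have "0 \<in> {..<k}" using k by simp
  then have ne: "{..<k} \<noteq> {}" by blast
  define R where "R = replicate_pmf k P"
  define A where "A = set_pmf R"
  have finA: "finite A" unfolding A_def R_def by (rule finite_rep)
  have lenA: "length X = k" if "X \<in> A" for X using that unfolding A_def R_def by (auto simp: set_replicate_pmf)
  define g where "g = (\<lambda>X. SOME xs. mset xs = Q \<and> dk Q (mset X) = (\<Sum>i<length X. dist (xs ! i) (X ! i)))"
  have g: "mset (g X) = Q \<and> dk Q (mset X) = (\<Sum>i<length X. dist (g X ! i) (X ! i))" if "X \<in> A" for X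
  proof -
    have "\<exists>xs. mset xs = Q \<and> dk Q (mset X) = (\<Sum>i<length X. dist (xs ! i) (X ! i))"
      by (rule dk_fix_right) (use lenA[OF that] szQ in simp)
    then show ?thesis unfolding g_def by (rule someI_ex)
  qed
  have lg: "length (g X) = k" if "X \<in> A" for X using g[OF that] szQ by (metis size_mset)
  define \<pi> where "\<pi> = bind_pmf R (\<lambda>X. map_pmf (\<lambda>i. (g X ! i, X ! i)) (pmf_of_set {..<k}))"
  have "map_pmf fst \<pi> = bind_pmf R (\<lambda>X. map_pmf (\<lambda>i. g X ! i) (pmf_of_set {..<k}))"
    unfolding \<pi>_def by (simp add: map_bind_pmf map_pmf_comp)
  also have "\<dots> = bind_pmf R (\<lambda>X. pmf_of_multiset Q)"
  proof (rule bind_pmf_cong[OF refl])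
    fix X assume "X \<in> set_pmf R"
    then have X: "X \<in> A" unfolding A_def .
    show "map_pmf (\<lambda>i. g X ! i) (pmf_of_set {..<k}) = pmf_of_multiset Q"
      using nth_uniform[OF lg[OF X] k] g[OF X] by simp
  qed
  also have "\<dots> = DT Q" unfolding DT_def by simp
  finally have fst\<pi>: "map_pmf fst \<pi> = DT Q" .
  have "map_pmf snd \<pi> = bind_pmf R (\<lambda>X. map_pmf (\<lambda>i. X ! i) (pmf_of_set {..<k}))"
    unfolding \<pi>_def by (simp add: map_bind_pmf map_pmf_comp)
  also have "\<dots> = bind_pmf R (\<lambda>X. bind_pmf (pmf_of_set {..<k}) (\<lambda>i. return_pmf (X ! i)))"
    unfolding map_pmf_def ..
  also have "\<dots> = bind_pmf (pmf_of_set {..<k}) (\<lambda>i. bind_pmf R (\<lambda>X. return_pmf (X ! i)))"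
    by (rule bind_commute_pmf)
  also have "\<dots> = bind_pmf (pmf_of_set {..<k}) (\<lambda>i. P)"
  proof (rule bind_pmf_cong[OF refl])
    fix i assume "i \<in> set_pmf (pmf_of_set {..<k})"
    moreover have "0 \<in> {..<k}" using k by simp
    then have "{..<k} \<noteq> {}" by blast
    ultimately have "i < k" using set_pmf_of_set[of "{..<k}"] by auto
    then show "bind_pmf R (\<lambda>X. return_pmf (X ! i)) = P"
      using rep_nth[of i k P] unfolding R_def map_pmf_def by simp
  qed
  also have "\<dots> = P" by simp
  finally have snd\<pi>: "map_pmf snd \<pi> = P" .
  have cp: "\<pi> \<in> couplings (DT Q) P" unfolding couplings_def using fst\<pi> snd\<pi> by simp
  have "measure_pmf.expectation \<pi> (\<lambda>(x,y). dist x y)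
      = (\<Sum>X\<in>A. pmf R X *\<^sub>R measure_pmf.expectation (map_pmf (\<lambda>i. (g X ! i, X ! i)) (pmf_of_set {..<k})) (\<lambda>(x,y). dist x y))"
    unfolding \<pi>_def by (rule pmf_expectation_bind[OF finA]) (auto simp: A_def)
  also have "\<dots> = (\<Sum>X\<in>A. pmf R X * (dk Q (mset X) / k))"
  proof (rule sum.cong[OF refl])
    fix X assume X: "X \<in> A"
    have "measure_pmf.expectation (map_pmf (\<lambda>i. (g X ! i, X ! i)) (pmf_of_set {..<k})) (\<lambda>(x,y). dist x y)
        = (\<Sum>i<k. dist (g X ! i) (X ! i)) / k"
      using ne by (simp add: integral_pmf_of_set)
    also have "\<dots> = dk Q (mset X) / k" using g[OF X] lenA[OF X] by simp
    finally show "pmf R X *\<^sub>R measure_pmf.expectation (map_pmf (\<lambda>i. (g X ! i, X ! i)) (pmf_of_set {..<k})) (\<lambda>(x,y). dist x y)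
        = pmf R X * (dk Q (mset X) / k)" by simp
  qed
  also have "\<dots> = rp_cost k P Q / k"
  proof -
    have "rp_cost k P Q = measure_pmf.expectation R (\<lambda>X. dk Q (mset X))"
      unfolding rp_cost_def Pk_def R_def by simp
    also have "\<dots> = (\<Sum>X\<in>A. pmf R X *\<^sub>R dk Q (mset X))"
      by (rule integral_measure_pmf[OF finA]) (auto simp: A_def)
    finally show ?thesis by (simp add: sum_divide_distrib)
  qed
  finally have "measure_pmf.expectation \<pi> (\<lambda>(x,y). dist x y) = rp_cost k P Q / k" .
  with wass_le[OF cp] have "wasserstein (DT Q) P \<le> rp_cost k P Q / k" by simp
  then show ?thesis using k by (simp add: field_simps)
qed

lemma upper_wass:
  fixes S Q :: "'a::{finite,metric_space} multiset"
  assumes "size S = k" "size Q = k" "k \<ge> 1"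
  shows "dk S Q \<le> k * (wasserstein (DT S) P + wasserstein (DT Q) P)"
proof -
  have kp: "real k > 0" using assms by simp
  have "dk S Q / k - measure_pmf.expectation \<pi>2 (\<lambda>(x,y). dist x y) \<le> wasserstein (DT S) P"
    if c2: "\<pi>2 \<in> couplings (DT Q) P" for \<pi>2
    unfolding wasserstein_def
  proof (rule cINF_greatest[OF couplings_ne])
    fix \<pi>1 assume c1: "\<pi>1 \<in> couplings (DT S) P"
    from dk_upper[OF assms c1 c2] kp
    show "dk S Q / k - measure_pmf.expectation \<pi>2 (\<lambda>(x,y). dist x y) \<le> measure_pmf.expectation \<pi>1 (\<lambda>(x,y). dist x y)"
      by (simp add: field_simps)
  qed
  then have "dk S Q / k - wasserstein (DT S) P \<le> wasserstein (DT Q) P"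
    unfolding wasserstein_def[of "DT Q"]
    by (intro cINF_greatest[OF couplings_ne]) (simp add: algebra_simps)
  then show ?thesis using kp by (simp add: field_simps)
qed

lemma finite_Pk: "finite (set_pmf (Pk k (P::'a::finite pmf)))"
  unfolding Pk_def set_map_pmf by (rule finite_imageI[OF finite_rep])

lemma rp_triangle:
  fixes S Q :: "'a::{finite,metric_space} multiset"
  assumes "size S = k" "size Q = k"
  shows "rp_cost k P S \<le> dk S Q + rp_cost k P Q"
proof -
  have sz: "size X = k" if "X \<in> set_pmf (Pk k P)" for X
    using that unfolding Pk_def by (auto simp: set_replicate_pmf)
  have "rp_cost k P S \<le> measure_pmf.expectation (Pk k P) (\<lambda>X. dk S Q + dk Q X)"
    unfolding rp_cost_def
  proof (rule integral_mono_AE)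
    show "integrable (measure_pmf (Pk k P)) (\<lambda>X. dk S X)" by (rule integrable_measure_pmf_finite[OF finite_Pk])
    show "integrable (measure_pmf (Pk k P)) (\<lambda>X. dk S Q + dk Q X)" by (rule integrable_measure_pmf_finite[OF finite_Pk])
    show "AE X in measure_pmf (Pk k P). dk S X \<le> dk S Q + dk Q X"
      by (rule AE_pmfI) (rule dk_triangle; use assms sz in simp)
  qed
  also have "\<dots> = dk S Q + rp_cost k P Q"
    unfolding rp_cost_def
    by (subst Bochner_Integration.integral_add) (auto intro: integrable_measure_pmf_finite[OF finite_Pk])
  finally show ?thesis .
qed

theorem theorem5:
  fixes P :: "'a::{finite, metric_space} pmf"
    and k :: nat and Opt S :: "'a multiset" and \<rho> :: real
  assumes "k \<ge> 1"
    and "Opt \<in> mset_k k"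
    and "\<forall>T\<in>mset_k k. rp_cost k P Opt \<le> rp_cost k P T"
    and "\<rho> \<ge> 1"
    and "S \<in> mset_k k"
    and "wasserstein (DT S) P \<le> \<rho> * (INF T\<in>mset_k k. wasserstein (DT T) P)"
  shows "rp_cost k P S \<le> (\<rho> + 2) * rp_cost k P Opt"
proof -
  have szO: "size Opt = k" and szS: "size S = k" using assms(2,5) unfolding mset_k_def by auto
  have I: "(INF T\<in>mset_k k. wasserstein (DT T) P) \<le> wasserstein (DT Opt) P"
    by (rule cINF_lower[OF _ assms(2)]) (auto intro: bdd_belowI2[OF wass_nonneg])
  have WS: "wasserstein (DT S) P \<le> \<rho> * wasserstein (DT Opt) P"
    using assms(6) I assms(4) by (meson dual_order.trans mult_left_mono order.trans zero_le_one)
  have WO: "k * wasserstein (DT Opt) P \<le> rp_cost k P Opt" by (rule lower[OF szO assms(1)])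
  have "rp_cost k P S \<le> dk S Opt + rp_cost k P Opt" by (rule rp_triangle[OF szS szO])
  also have "dk S Opt \<le> k * (wasserstein (DT S) P + wasserstein (DT Opt) P)"
    by (rule upper_wass[OF szS szO assms(1)])
  also have "\<dots> \<le> k * ((\<rho> + 1) * wasserstein (DT Opt) P)"
    using WS by (intro mult_left_mono) (auto simp: algebra_simps)
  also have "\<dots> = (\<rho> + 1) * (k * wasserstein (DT Opt) P)" by simp
  also have "\<dots> \<le> (\<rho> + 1) * rp_cost k P Opt"
    using WO assms(4) by (intro mult_left_mono) auto
  finally show ?thesis by (simp add: algebra_simps)
qed


end
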